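(* Let $G$ be a group with identity $e$, $A$ a set containing two distinct elements $0$ and $1$, and $S \subseteq G$ finite with $e \in S$ and $S \neq \{e\}$. Let $p \in A^S$ be given by $p(e) = 1$ and $p(s) = 0$ for $s \in S \setminus\{e\}$, and let $\tau : A^G \to A^G$ be the lazy cellular automaton with minimal local map $\mu : A^S \to A$, unique active transition $p$ and writing symbol $\mu(p) = 0$. Then for any $n\geq 2$, $\mathrm{ord}(\tau) > n$ if and only if there exists a word $(s_1, \dots, s_{n-1}) \in (S\setminus\{e\})^{n-1}$ such that $(s_j \cdots s_i)^{-1} \notin S$ for all $1 \le i \leq j \le n-1$.
   Context: $A^G$ is the set of maps $G \to A$ with shift action $(g\cdot x)(h) := x(hg)$. A cellular automaton is a map $\tau : A^G \to A^G$ with a finite $S \subseteq G$ and $\mu : A^S \to A$ such that $\tau(x)(g) = \mu((g\cdot x)|_S)$; the minimal local map is the local defining map on the neighborhood of smallest cardinality. $\tau$ is lazy with unique active transition $p \in A^S$ and writing symbol $\mu(p)$ if $e \in S$ and for all $z \in A^S$: $\mu(z) = z(e)$ iff $z \neq p$. $\tau^k$ is the $k$-fold composition, $\tau^0$ the identity; $\mathrm{ord}(\tau) := |\{\tau^k : k \in \mathbb{N}\}|$, $\mathbb{N}=\{0,1,\dots\}$. A word of length $m$ on $T \subseteq G$ is an element of $T^m$. *)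

theory Defs
  imports "HOL-Library.FuncSet" "HOL-Library.Extended_Nat"
begin

text \<open>The group G is a type of class group_add (written additively, not necessarily
  commutative): identity e = 0, product g h = g + h, inverse = uminus.
  Configurations A^G are functions 'g => 'a; patterns A^S are extensional
  functions S ->E UNIV.\<close>

definition shift :: "'g::group_add \<Rightarrow> ('g \<Rightarrow> 'a) \<Rightarrow> ('g \<Rightarrow> 'a)" where
  "shift g x = (\<lambda>h. x (h + g))"

definition is_ca_with :: "(('g::group_add \<Rightarrow> 'a) \<Rightarrow> ('g \<Rightarrow> 'a)) \<Rightarrow> 'g set \<Rightarrow> (('g \<Rightarrow> 'a) \<Rightarrow> 'a) \<Rightarrow> bool" where
  "is_ca_with \<tau> S \<mu> \<longleftrightarrow> finite S \<and> (\<forall>x g. \<tau> x g = \<mu> (restrict (shift g x) S))"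

definition is_minimal_local_map :: "(('g::group_add \<Rightarrow> 'a) \<Rightarrow> ('g \<Rightarrow> 'a)) \<Rightarrow> 'g set \<Rightarrow> (('g \<Rightarrow> 'a) \<Rightarrow> 'a) \<Rightarrow> bool" where
  "is_minimal_local_map \<tau> S \<mu> \<longleftrightarrow> is_ca_with \<tau> S \<mu> \<and>
     (\<forall>S' \<mu>'. is_ca_with \<tau> S' \<mu>' \<longrightarrow> card S \<le> card S')"

definition is_lazy_with :: "(('g::group_add \<Rightarrow> 'a) \<Rightarrow> ('g \<Rightarrow> 'a)) \<Rightarrow> 'g set \<Rightarrow> (('g \<Rightarrow> 'a) \<Rightarrow> 'a) \<Rightarrow> ('g \<Rightarrow> 'a) \<Rightarrow> bool" where
  "is_lazy_with \<tau> S \<mu> p \<longleftrightarrow> is_ca_with \<tau> S \<mu> \<and> p \<in> S \<rightarrow>\<^sub>E UNIV \<and> 0 \<in> S \<and>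
     (\<forall>z \<in> S \<rightarrow>\<^sub>E UNIV. \<mu> z = z 0 \<longleftrightarrow> z \<noteq> p)"

definition ca_order :: "('c \<Rightarrow> 'c) \<Rightarrow> enat" where
  "ca_order \<tau> = (if finite {\<tau> ^^ k | k. True} then enat (card {\<tau> ^^ k | k. True}) else \<infinity>)"

definition rprod :: "(nat \<Rightarrow> 'g::group_add) \<Rightarrow> nat \<Rightarrow> nat \<Rightarrow> 'g" where
  "rprod s i j = sum_list (rev (map s [i..<Suc j]))"

end

theory Submission
  imports Defs
begin

lemma grp_telesc: "(a::'g::group_add) - b + (b - c) = a - c"
  by (simp only: diff_conv_add_uminus add.assoc minus_add_cancel)

lemma grp_sub2: "(b::'g::group_add) - (a + b) = - a"
  by (simp only: diff_conv_add_uminus minus_add add_minus_cancel)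

lemma rprod_single: "rprod s a a = s a"
  by (simp add: rprod_def)

lemma rprod_split:
  assumes "i \<le> Suc K" "K \<le> J"
  shows "rprod s i J = rprod s (Suc K) J + rprod s i K"
proof -
  have "[i..<Suc K + (J - K)] = [i..<Suc K] @ [Suc K..<Suc K + (J - K)]"
    by (rule upt_add_eq_append) (use assms in simp)
  then have "[i..<Suc J] = [i..<Suc K] @ [Suc K..<Suc J]"
    using assms by simp
  then show ?thesis by (simp add: rprod_def)
qed

definition chain :: "'g::group_add set \<Rightarrow> (nat \<Rightarrow> 'g) \<Rightarrow> nat \<Rightarrow> bool" where
  "chain S c m \<longleftrightarrow> (\<forall>k<m. c k - c (Suc k) \<in> S - {0}) \<and> (\<forall>i j. i < j \<and> j \<le> m \<longrightarrow> c j - c i \<notin> S)"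

locale lz =
  fixes \<tau> :: "('g::group_add \<Rightarrow> 'a) \<Rightarrow> ('g \<Rightarrow> 'a)" and S :: "'g set" and a0 a1 :: 'a
  assumes a01: "a0 \<noteq> a1" and S0: "0 \<in> S"
  and step: "\<And>x g. \<tau> x g = (if x g = a1 \<and> (\<forall>s\<in>S-{0}. x (s+g) = a0) then a0 else x g)"
begin

lemma change: "\<tau> x g \<noteq> x g \<Longrightarrow> x g = a1 \<and> \<tau> x g = a0 \<and> (\<forall>s\<in>S-{0}. x (s+g) = a0)"
proof (cases "x g = a1 \<and> (\<forall>s\<in>S-{0}. x (s+g) = a0)")
  case True
  then have "\<tau> x g = a0" by (rule trans[OF step if_P])
  then show ?thesis using True by blast
next
  case False
  then have "\<tau> x g = x g" by (rule trans[OF step if_not_P])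
  moreover assume "\<tau> x g \<noteq> x g"
  ultimately show ?thesis by blast
qed

lemma a0_stay_iter: assumes "(\<tau>^^i) x g = a0" "i \<le> j" shows "(\<tau>^^j) x g = a0"
  using assms(2,1)
proof (induction j rule: dec_induct)
  case base then show ?case by simp
next
  case (step j)
  then show ?case using change[of "(\<tau>^^j) x" g] by auto
qed

lemma a1_back: assumes "i \<le> j" shows "(\<tau>^^j) x g = a1 \<Longrightarrow> (\<tau>^^i) x g = a1"
  using assms
proof (induction j rule: dec_induct)
  case base then show ?case by simp
next
  case (step j)
  have "(\<tau>^^j) x g = a1"
  proof (rule ccontr)
    assume "(\<tau>^^j) x g \<noteq> a1"
    then have "\<tau> ((\<tau>^^j) x) g = (\<tau>^^j) x g" using change[of "(\<tau>^^j) x" g] by blast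
    then show False using step.prems \<open>(\<tau>^^j) x g \<noteq> a1\<close> by simp
  qed
  then show ?case using step.IH by simp
qed

lemma stab: "\<tau>^^i = \<tau>^^j \<Longrightarrow> i < j \<Longrightarrow> \<tau>^^i = \<tau>^^Suc i"
proof (rule ext, rule ext, rule ccontr)
  fix x g assume e: "\<tau>^^i = \<tau>^^j" and ij: "i < j" and ne: "(\<tau>^^i) x g \<noteq> (\<tau>^^Suc i) x g"
  then have "(\<tau>^^i) x g = a1" "(\<tau>^^Suc i) x g = a0" using change[of "(\<tau>^^i) x" g] by auto
  then have "(\<tau>^^j) x g = a0" using a0_stay_iter[of "Suc i" x g j] ij by simp
  with e \<open>(\<tau>^^i) x g = a1\<close> a01 show False by simp
qed

lemma stab_all: assumes "\<tau>^^i = \<tau>^^Suc i" shows "k \<ge> i \<Longrightarrow> \<tau>^^k = \<tau>^^i"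
proof (induction k rule: dec_induct)
  case base then show ?case by simp
next
  case (step k)
  have "\<tau>^^Suc k = \<tau> \<circ> \<tau>^^k" by (rule funpow.simps(2))
  also have "\<dots> = \<tau> \<circ> \<tau>^^i" using step.IH by (rule arg_cong)
  also have "\<dots> = \<tau>^^Suc i" by (rule funpow.simps(2)[symmetric])
  also have "\<dots> = \<tau>^^i" by (rule assms[symmetric])
  finally show ?case .
qed

lemma order_iff: assumes "n \<ge> 1" shows "ca_order \<tau> > enat n \<longleftrightarrow> \<tau>^^(n-1) \<noteq> \<tau>^^n"
proof
  define T where "T = {\<tau> ^^ k | k. True}"
  assume g: "ca_order \<tau> > enat n"
  show "\<tau>^^(n-1) \<noteq> \<tau>^^n"
  proof
    assume e: "\<tau>^^(n-1) = \<tau>^^n"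
    have sn: "Suc (n-1) = n" using assms by simp
    have e': "\<tau>^^(n-1) = \<tau>^^Suc (n-1)" unfolding sn by (rule e)
    have TS: "T \<subseteq> (\<lambda>k. \<tau>^^k) ` {..<n}"
    proof
      fix f assume "f \<in> T"
      then obtain k where k: "f = \<tau>^^k" unfolding T_def by blast
      show "f \<in> (\<lambda>k. \<tau>^^k) ` {..<n}"
      proof (cases "k < n")
        case True then show ?thesis using k by blast
      next
        case False
        then have "\<tau>^^k = \<tau>^^(n-1)" using stab_all[OF e', of k] by linarith
        moreover have "n - 1 \<in> {..<n}" using assms by simp
        ultimately show ?thesis using k by blast
      qed
    qed
    have c: "card ((\<lambda>k. \<tau>^^k) ` {..<n}) \<le> n"
      using card_image_le[of "{..<n}" "\<lambda>k. \<tau>^^k"] by (simp only: finite_lessThan card_lessThan)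
    have fin: "finite T" using finite_subset[OF TS] by blast
    have "card T \<le> n" using card_mono[OF _ TS] c by simp
    moreover have "ca_order \<tau> = enat (card T)" using fin unfolding ca_order_def T_def by (simp only: if_True)
    ultimately show False using g by simp
  qed
next
  assume ne: "\<tau>^^(n-1) \<noteq> \<tau>^^n"
  have inj: "inj_on (\<lambda>k. \<tau>^^k) {..n}"
  proof (rule inj_onI, rule ccontr)
    fix i j assume i: "i \<in> {..n}" and j: "j \<in> {..n}" and e: "\<tau>^^i = \<tau>^^j" and d: "i \<noteq> j"
    have "\<exists>a b. a < b \<and> b \<le> n \<and> \<tau>^^a = \<tau>^^b"
    proof (cases "i < j")
      case True then show ?thesis using j e by (intro exI[of _ i] exI[of _ j]) simp
    next
      case False then have "j < i" using d by simp
      then show ?thesis using i e by (intro exI[of _ j] exI[of _ i]) simp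
    qed
    then obtain a b where ab: "a < b" "b \<le> n" "\<tau>^^a = \<tau>^^b" by blast
    have s: "\<tau>^^a = \<tau>^^Suc a" using stab[OF ab(3) ab(1)] .
    have "a \<le> n - 1" "a \<le> n" using ab by auto
    then have "\<tau>^^(n-1) = \<tau>^^a" "\<tau>^^n = \<tau>^^a" using stab_all[OF s, of "n-1"] stab_all[OF s, of n] by blast+
    with ne show False by simp
  qed
  define T where "T = {\<tau> ^^ k | k. True}"
  have sub: "(\<lambda>k. \<tau>^^k) ` {..n} \<subseteq> T" unfolding T_def by blast
  show "ca_order \<tau> > enat n"
  proof (cases "finite T")
    case True
    have "card ((\<lambda>k. \<tau>^^k) ` {..n}) = Suc n" using card_image[OF inj] by (simp only: card_atMost)
    then have "Suc n \<le> card T" using card_mono[OF True sub] by (simp only:)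
    then have "enat n < enat (card T)" by simp
    moreover have "ca_order \<tau> = enat (card T)" using True unfolding ca_order_def T_def by (simp only: if_True)
    ultimately show ?thesis by (simp only:)
  next
    case False
    then have "ca_order \<tau> = \<infinity>" unfolding ca_order_def T_def by (simp only: if_False)
    then show ?thesis by simp
  qed
qed

lemma change': "(\<tau>^^i) x g \<noteq> (\<tau>^^Suc i) x g \<Longrightarrow>
   (\<tau>^^i) x g = a1 \<and> (\<tau>^^Suc i) x g = a0 \<and> (\<forall>s\<in>S-{0}. (\<tau>^^i) x (s+g) = a0)"
  using change[of "(\<tau>^^i) x" g] by (metis comp_apply funpow.simps(2))

lemma dyn_to_chain0:
  "(\<tau>^^k) x h \<noteq> (\<tau>^^Suc k) x h \<Longrightarrow> \<exists>c. c k = h \<and> (\<forall>i<k. c i - c (Suc i) \<in> S-{0}) \<and>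
     (\<forall>i\<le>k. (\<tau>^^i) x (c i) \<noteq> (\<tau>^^Suc i) x (c i))"
proof (induction k arbitrary: h)
  case 0 then show ?case by (intro exI[of _ "\<lambda>_. h"]) auto
next
  case (Suc k)
  define y' where "y' = (\<tau>^^k) x"
  define y where "y = (\<tau>^^Suc k) x"
  have yy: "y = \<tau> y'" unfolding y_def y'_def by simp
  have ch: "y h = a1" "\<forall>s\<in>S-{0}. y (s+h) = a0" using change[of y h] Suc.prems unfolding y_def by auto
  have "y' h = a1" using ch(1) change[of y' h] a01 yy by metis
  then have "y' h = \<tau> y' h" using ch yy by simp
  then obtain t where t: "t \<in> S-{0}" "y' (t+h) \<noteq> a0" using step[of y' h] \<open>y' h = a1\<close> a01 by (auto split: if_splits)
  then have "y' (t+h) \<noteq> (\<tau> y') (t+h)" using ch yy by auto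
  then have "(\<tau>^^k) x (t+h) \<noteq> (\<tau>^^Suc k) x (t+h)" unfolding y'_def by simp
  from Suc.IH[OF this] obtain c where c: "c k = t + h" "\<forall>i<k. c i - c (Suc i) \<in> S-{0}"
    "\<forall>i\<le>k. (\<tau>^^i) x (c i) \<noteq> (\<tau>^^Suc i) x (c i)" by blast
  show ?case
  proof (intro exI[of _ "c(Suc k := h)"] conjI allI impI)
    fix i assume "i < Suc k"
    then show "(c(Suc k := h)) i - (c(Suc k := h)) (Suc i) \<in> S-{0}"
      using c t by (cases "i = k") auto
  next
    fix i assume "i \<le> Suc k"
    then show "(\<tau>^^i) x ((c(Suc k := h)) i) \<noteq> (\<tau>^^Suc i) x ((c(Suc k := h)) i)"
      using c Suc.prems by (cases "i = Suc k") auto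
  qed simp
qed

lemma dyn_to_chain:
  assumes "(\<tau>^^m) x h \<noteq> (\<tau>^^Suc m) x h" shows "\<exists>c. chain S c m"
proof -
  from dyn_to_chain0[OF assms] obtain c where c: "\<forall>i<m. c i - c (Suc i) \<in> S-{0}"
    "\<forall>i\<le>m. (\<tau>^^i) x (c i) \<noteq> (\<tau>^^Suc i) x (c i)" by blast
  have "c j - c i \<notin> S" if ij: "i < j" "j \<le> m" for i j
  proof
    assume sS: "c j - c i \<in> S"
    define s where "s = c j - c i"
    have cj: "c j = s + c i" unfolding s_def by simp
    have ci: "(\<tau>^^i) x (c i) = a1" "(\<tau>^^Suc i) x (c i) = a0" "\<forall>s\<in>S-{0}. (\<tau>^^i) x (s + c i) = a0"
      using change'[of i x "c i"] c(2) ij by auto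
    have "(\<tau>^^j) x (c j) = a1" using change'[of j x "c j"] c(2) ij by auto
    then have cji: "(\<tau>^^i) x (c j) = a1" using a1_back[of i j x "c j"] ij by simp
    show False
    proof (cases "s = 0")
      case True
      then have "c j = c i" using cj by simp
      then have "(\<tau>^^j) x (c j) = a0" using a0_stay_iter[OF ci(2)] ij by simp
      with \<open>(\<tau>^^j) x (c j) = a1\<close> a01 show False by simp
    next
      case False
      then have "s \<in> S - {0}" using sS unfolding s_def by simp
      then have "(\<tau>^^i) x (s + c i) = a0" using ci(3) by blast
      then have "(\<tau>^^i) x (c j) = a0" using cj by simp
      with cji a01 show False by simp
    qed
  qed
  then show ?thesis using c unfolding chain_def by blast
qed

lemma chain_to_dyn:
  assumes ch: "chain S c m" shows "\<tau>^^m \<noteq> \<tau>^^Suc m"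
proof -
  define x where "x = (\<lambda>g. if g \<in> c ` {0..m} then a1 else a0)"
  have dist: "c j \<noteq> c i" if "i < j" "j \<le> m" for i j
    using ch that S0 unfolding chain_def by (metis diff_self)
  have it: "k \<le> Suc m \<Longrightarrow> (\<tau>^^k) x = (\<lambda>g. if g \<in> c ` {k..m} then a1 else a0)" for k
  proof (induction k)
    case 0 then show ?case by (simp add: x_def)
  next
    case (Suc k)
    define y where "y = (\<lambda>g. if g \<in> c ` {k..m} then a1 else a0)"
    have "(\<tau>^^Suc k) x = \<tau> y" using Suc by (simp add: y_def)
    also have "\<tau> y = (\<lambda>g. if g \<in> c ` {Suc k..m} then a1 else a0)"
    proof
      fix g
      show "\<tau> y g = (if g \<in> c ` {Suc k..m} then a1 else a0)"
      proof (cases "g \<in> c ` {k..m}")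
        case False
        then have "g \<notin> c ` {Suc k..m}" by auto
        then show ?thesis using False step[of y g] a01 by (simp add: y_def)
      next
        case True
        then obtain j where j: "j \<in> {k..m}" "g = c j" by auto
        show ?thesis
        proof (cases "j = k")
          case True
          have nb: "\<forall>s\<in>S-{0}. y (s+g) = a0"
          proof
            fix s assume s: "s \<in> S - {0}"
            have "s + c k \<notin> c ` {k..m}"
            proof
              assume "s + c k \<in> c ` {k..m}"
              then obtain l where l: "l \<in> {k..m}" "s + c k = c l" by auto
              show False
              proof (cases "l = k")
                case True then show False using l s by (metis Diff_iff add.left_neutral add_right_cancel insertI1)
              next
                case False
                then have "c l - c k \<notin> S" using ch l unfolding chain_def by auto
                moreover have "c l - c k = s" using l(2)[symmetric] by simp
                ultimately show False using s by simp
              qed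
            qed
            then show "y (s+g) = a0" using j True by (simp add: y_def)
          qed
          have "g \<notin> c ` {Suc k..m}"
          proof
            assume "g \<in> c ` {Suc k..m}"
            then obtain l where l: "l \<in> {Suc k..m}" "g = c l" by blast
            have "c l \<noteq> c k" using dist[of k l] l by simp
            then show False using l j True by simp
          qed
          then show ?thesis using step[of y g] nb j by (simp add: y_def)
        next
          case False
          then have jk: "k < j" using j by auto
          have jm: "j - 1 < m" "Suc (j - 1) = j" using jk j by auto
          have "\<forall>k<m. c k - c (Suc k) \<in> S - {0}" using ch unfolding chain_def by blast
          then have "c (j-1) - c (Suc (j-1)) \<in> S - {0}" using jm(1) by blast
          then have "c (j-1) - c j \<in> S - {0}" using jm(2) by simp
          moreover have "y ((c (j-1) - c j) + g) = a1"
          proof -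
            have "j-1 \<in> {k..m}" using j jk by auto
            then have "c (j-1) \<in> c`{k..m}" by blast
            then show ?thesis using j(2) by (simp add: y_def)
          qed
          ultimately have "\<not> (\<forall>s\<in>S-{0}. y (s+g) = a0)" using a01 by force
          then have "\<tau> y g = y g" using step[of y g] by auto
          then show ?thesis using j jk by (auto simp: y_def)
        qed
      qed
    qed
    finally show ?case .
  qed
  have "(\<tau>^^m) x (c m) = a1" using it[of m] by simp
  moreover have "(\<tau>^^Suc m) x (c m) = a0" using it[of "Suc m"] by simp
  ultimately show ?thesis using a01 by (metis)
qed

end

lemma word_to_chain:
  assumes w1: "\<forall>i \<in> {1..m}. s i \<in> S - {0}"
    and w2: "\<forall>i j. 1 \<le> i \<and> i \<le> j \<and> j \<le> m \<longrightarrow> - rprod s i j \<notin> S"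
  shows "chain S (\<lambda>k. rprod s 1 (m-k)) m"
  unfolding chain_def
proof (intro conjI allI impI)
  fix k assume k: "k < m"
  have "rprod s 1 (m-k) = rprod s (m-k) (m-k) + rprod s 1 (m - Suc k)"
    using rprod_split[of 1 "m - Suc k" "m-k" s] k by (simp add: Suc_diff_Suc)
  then have "rprod s 1 (m-k) - rprod s 1 (m - Suc k) = s (m-k)" by (simp add: rprod_single)
  then show "rprod s 1 (m-k) - rprod s 1 (m - Suc k) \<in> S - {0}" using w1 k by auto
next
  fix i j assume ij: "i < j \<and> j \<le> m"
  have "rprod s 1 (m-i) = rprod s (Suc (m-j)) (m-i) + rprod s 1 (m-j)"
    using rprod_split[of 1 "m-j" "m-i" s] ij by (simp add: diff_le_mono2)
  then have "rprod s 1 (m-j) - rprod s 1 (m-i) = - rprod s (Suc (m-j)) (m-i)"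
    by (simp add: grp_sub2)
  moreover have "- rprod s (Suc (m-j)) (m-i) \<notin> S" using w2 ij by auto
  ultimately show "rprod s 1 (m-j) - rprod s 1 (m-i) \<notin> S" by simp
qed

lemma chain_to_word:
  assumes ch: "chain S c m"
  shows "\<exists>s :: nat \<Rightarrow> 'g::group_add. (\<forall>i \<in> {1..m}. s i \<in> S - {0}) \<and>
       (\<forall>i j. 1 \<le> i \<and> i \<le> j \<and> j \<le> m \<longrightarrow> - rprod s i j \<notin> S)"
proof -
  define s where "s = (\<lambda>l. c (m-l) - c (Suc m - l))"
  have r: "rprod s i j = c (m-j) - c (Suc m - i)" if "1 \<le> i" "i \<le> j" "j \<le> m" for i j
    using that(2,3)
  proof (induction j rule: dec_induct)
    case base then show ?case by (simp add: rprod_single s_def)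
  next
    case (step j)
    have "rprod s i (Suc j) = rprod s (Suc j) (Suc j) + rprod s i j"
      using rprod_split[of i j "Suc j" s] step by simp
    also have "\<dots> = (c (m - Suc j) - c (m - j)) + (c (m-j) - c (Suc m - i))"
      using step by (simp add: rprod_single s_def Suc_diff_Suc)
    finally show ?case by (simp add: grp_telesc)
  qed
  show ?thesis
  proof (intro exI[of _ s] conjI ballI allI impI)
    fix i assume "i \<in> {1..m}"
    then have i: "m - i < m" "Suc (m - i) = Suc m - i" by auto
    have "\<forall>k<m. c k - c (Suc k) \<in> S - {0}" using ch unfolding chain_def by blast
    then have "c (m-i) - c (Suc (m-i)) \<in> S - {0}" using i(1) by blast
    then show "s i \<in> S - {0}" using i(2) unfolding s_def by simp
  next
    fix i j assume ij: "1 \<le> i \<and> i \<le> j \<and> j \<le> m"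
    have "- rprod s i j = c (Suc m - i) - c (m-j)" using r ij by (simp add: minus_diff_eq)
    moreover have "c (Suc m - i) - c (m-j) \<notin> S"
    proof -
      have "m - j < Suc m - i" "Suc m - i \<le> m" using ij by auto
      then show ?thesis using ch unfolding chain_def by blast
    qed
    ultimately show "- rprod s i j \<notin> S" by simp
  qed
qed

theorem proposition4:
  fixes \<tau> :: "('g::group_add \<Rightarrow> 'a) \<Rightarrow> ('g \<Rightarrow> 'a)"
    and S :: "'g set" and \<mu> :: "('g \<Rightarrow> 'a) \<Rightarrow> 'a" and p :: "'g \<Rightarrow> 'a"
    and a0 a1 :: 'a and n :: nat
  assumes "a0 \<noteq> a1"
    and "finite S" and "0 \<in> S" and "S \<noteq> {0}"
    and "p = restrict (\<lambda>s. if s = 0 then a1 else a0) S"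
    and "is_minimal_local_map \<tau> S \<mu>"
    and "is_lazy_with \<tau> S \<mu> p"
    and "\<mu> p = a0"
    and "n \<ge> 2"
  shows "ca_order \<tau> > enat n \<longleftrightarrow>
    (\<exists>s :: nat \<Rightarrow> 'g. (\<forall>i \<in> {1..n-1}. s i \<in> S - {0}) \<and>
       (\<forall>i j. 1 \<le> i \<and> i \<le> j \<and> j \<le> n - 1 \<longrightarrow> - rprod s i j \<notin> S))"
proof -
  have stp: "\<tau> x g = (if x g = a1 \<and> (\<forall>s\<in>S-{0}. x (s+g) = a0) then a0 else x g)" for x g
  proof -
    define z where "z = restrict (shift g x) S"
    have t: "\<tau> x g = \<mu> z" using assms(7) unfolding is_lazy_with_def is_ca_with_def z_def by blast
    have zE: "z \<in> S \<rightarrow>\<^sub>E UNIV" unfolding z_def by simp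
    have lz: "\<forall>z \<in> S \<rightarrow>\<^sub>E UNIV. \<mu> z = z 0 \<longleftrightarrow> z \<noteq> p" using assms(7) unfolding is_lazy_with_def by blast
    have zp: "z = p \<longleftrightarrow> x g = a1 \<and> (\<forall>s\<in>S-{0}. x (s+g) = a0)"
    proof
      assume zp: "z = p"
      have zs: "x (s+g) = (if s = 0 then a1 else a0)" if "s \<in> S" for s
      proof -
        have "z s = p s" using zp by simp
        moreover have "z s = x (s+g)" using that unfolding z_def shift_def by simp
        moreover have "p s = (if s = 0 then a1 else a0)" using that unfolding assms(5) by simp
        ultimately show ?thesis by simp
      qed
      have "x g = a1" using zs[OF assms(3)] by simp
      moreover have "\<forall>s\<in>S-{0}. x (s+g) = a0" using zs by simp
      ultimately show "x g = a1 \<and> (\<forall>s\<in>S-{0}. x (s+g) = a0)" by blast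
    next
      assume h: "x g = a1 \<and> (\<forall>s\<in>S-{0}. x (s+g) = a0)"
      show "z = p" unfolding z_def assms(5) shift_def
        by (rule restrict_ext) (use h in auto)
    qed
    show ?thesis
    proof (cases "z = p")
      case True then show ?thesis using t zp assms(8) by simp
    next
      case False
      then have "\<mu> z = z 0" using lz zE by blast
      have nc: "\<not> (x g = a1 \<and> (\<forall>s\<in>S-{0}. x (s+g) = a0))" using zp False by blast
      have "\<tau> x g = x g" using t \<open>\<mu> z = z 0\<close> assms(3) by (simp add: z_def shift_def)
      then show ?thesis by (simp only: if_not_P[OF nc])
    qed
  qed
  interpret L: lz \<tau> S a0 a1
    by (rule lz.intro) (fact assms(1), fact assms(3), rule stp)
  define m where "m = n - 1"
  have m: "n = Suc m" "m \<ge> 1" using assms(9) unfolding m_def by arith+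
  have "ca_order \<tau> > enat n \<longleftrightarrow> \<tau>^^m \<noteq> \<tau>^^Suc m" using L.order_iff[of n] m by (simp del: funpow.simps)
  also have "\<dots> \<longleftrightarrow> (\<exists>c. chain S c m)"
  proof
    assume "\<tau>^^m \<noteq> \<tau>^^Suc m"
    then obtain x h where "(\<tau>^^m) x h \<noteq> (\<tau>^^Suc m) x h" by (meson ext)
    then show "\<exists>c. chain S c m" using L.dyn_to_chain by blast
  next
    assume "\<exists>c. chain S c m" then show "\<tau>^^m \<noteq> \<tau>^^Suc m" using L.chain_to_dyn by blast
  qed
  also have "\<dots> \<longleftrightarrow> (\<exists>s :: nat \<Rightarrow> 'g. (\<forall>i \<in> {1..m}. s i \<in> S - {0}) \<and>
       (\<forall>i j. 1 \<le> i \<and> i \<le> j \<and> j \<le> m \<longrightarrow> - rprod s i j \<notin> S))"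
  proof
    assume "\<exists>c. chain S c m" then obtain c where "chain S c m" by blast
    then show "\<exists>s :: nat \<Rightarrow> 'g. (\<forall>i \<in> {1..m}. s i \<in> S - {0}) \<and>
       (\<forall>i j. 1 \<le> i \<and> i \<le> j \<and> j \<le> m \<longrightarrow> - rprod s i j \<notin> S)" by (rule chain_to_word)
  next
    assume "\<exists>s :: nat \<Rightarrow> 'g. (\<forall>i \<in> {1..m}. s i \<in> S - {0}) \<and>
       (\<forall>i j. 1 \<le> i \<and> i \<le> j \<and> j \<le> m \<longrightarrow> - rprod s i j \<notin> S)"
    then obtain s :: "nat \<Rightarrow> 'g" where "\<forall>i \<in> {1..m}. s i \<in> S - {0}"
       "\<forall>i j. 1 \<le> i \<and> i \<le> j \<and> j \<le> m \<longrightarrow> - rprod s i j \<notin> S" by blast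
    then show "\<exists>c. chain S c m" using word_to_chain by blast
  qed
  finally show ?thesis using m by simp
qed

end
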